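(* Assume the setting described in the context. Let $U$ be a bounded open subset of $\mathbb C$ with $\overline U\subset\mathcal O_\rho$. Then there exist constants $C,c>0$ such that for all $z\in U$, all $\vec e\in\mathbb C^d$ and all $j,j_0\in\mathbb Z$, $$|W(z,j_0,j,\vec e)|\le C|\vec e|e^{-c|j-j_0|}.$$
   Context: Let $d,p,q\ge1$ be integers and $\boldsymbol\nu>0$. Let $F(\nu;u_{-p},\dots,u_{q-1})\in\mathbb R^d$ be a $C^1$ numerical flux on an open set $\mathcal U\subset\mathbb R^d$, consistent with a smooth flux $f$ ($F(\nu;u,\dots,u)=f(u)$), with $df(u)$ diagonalizable with real eigenvalues. Let $\bar u^s\in\mathcal U^{\mathbb Z}$ be a stationary discrete shock profile, i.e. a fixed point of $(\mathcal Nu)_j=u_j-\boldsymbol\nu(F(\boldsymbol\nu;u_{j-p+1},\dots,u_{j+q})-F(\boldsymbol\nu;u_{j-p},\dots,u_{j+q-1}))$, with $|\bar u^s_j-u^\pm|\le Ce^{-c|j|}$ as $j\to\pm\infty$ for some states $u^\pm$. Define $B_k^\pm=\boldsymbol\nu\partial_{u_k}F(\boldsymbol\nu;u^\pm,\dots,u^\pm)$ ($-p\le k\le q-1$), $A_q^\pm=-B^\pm_{q-1}$, $A_{-p}^\pm=B_{-p}^\pm$, $A_k^\pm=\delta_{k,0}\mathrm{Id}+B_k^\pm-B_{k-1}^\pm$ otherwise; and $B_{j,k}=\boldsymbol\nu\partial_{u_k}F(\boldsymbol\nu;\bar u^s_{j-p},\dots,\bar u^s_{j+q-1})$, $A_{j,q}=-B_{j+1,q-1}$,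 $A_{j,-p}=B_{j,-p}$, $A_{j,k}=\delta_{k,0}\mathrm{Id}+B_{j,k}-B_{j+1,k-1}$ otherwise. Assume: $df(u^\pm)$ commutes with each $B_k^\pm$; with $(\mathbf P^\pm)^{-1}A_k^\pm\mathbf P^\pm=\mathrm{diag}(\lambda^\pm_{l,k})_l$ ($\mathbf P^\pm$ an eigenvector matrix of $df(u^\pm)$) and $\mathcal F_l^\pm(\kappa)=\sum_{k=-p}^q\lambda_{l,k}^\pm\kappa^k$, one has $|\mathcal F_l^\pm(\kappa)|<1$ for $\kappa\in\mathbb S^1\setminus\{1\}$ and $\mathcal F_l^\pm(e^{i\xi})=\exp(-i\alpha_l^\pm\xi-\beta_l^\pm\xi^{2\mu}+O(|\xi|^{2\mu+1}))$ with $\alpha_l^\pm\ne0$ real, $\mu\ge1$, $\mathrm{Re}\beta^\pm_l>0$; and $A_{j,-p},A_{j,q},A^\pm_{-p},A^\pm_q$ are invertible. Let $\mathscr L$ be the operator on $\ell^2(\mathbb Z,\mathbb C^d)$, $(\mathscr Lh)_j=\sum_{k=-p}^qA_{j,k}h_{j+k}$, and $\mathscr L^\pm$ the analogous operators with $A_k^\pm$. Let $\mathcal O$ be the unbounded connected component of $\mathbb C\setminus(\sigma(\mathscr L^+)\cup\sigma(\mathscr L^-))$ and $\mathcal O_\rho=\mathcal O\cap\rho(\mathscr L)$, $\rho(\mathscr L)$ the resolvent set. For $z\in\mathcal O_\rho$ and $j_0\in\mathbb Z$, the spatial Green's function $G(z,j_0,\cdot)\in\ell^2(\mathbb Z,\mathcal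 M_d(\mathbb C))$ is defined by $(z\mathrm{Id}-\mathscr L)G(z,j_0,\cdot)\vec e=\delta_{j_0}\vec e$ for all $\vec e\in\mathbb C^d$, where $\delta_{j_0}=(\delta_{j_0,j}\mathrm{Id})_j$. Set $W(z,j_0,j,\vec e)=(G(z,j_0,j+q-1)\vec e,\dots,G(z,j_0,j-p)\vec e)^T\in\mathbb C^{d(p+q)}$. *)

theory Defs
  imports "HOL-Analysis.Analysis"
begin

text \<open>The arguments \<open>(u_{-p},\<dots>,u_{q-1})\<close> of the numerical flux are encoded as a
 function \<open>int \<Rightarrow> real^'d\<close> of which only the values at \<open>{-p..q-1}\<close> matter.\<close>

definition diagm :: "('d::finite \<Rightarrow> 'a::zero) \<Rightarrow> 'a^'d^'d" where
  "diagm l = (\<chi> i j. if i = j then l i else 0)"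

definition cmat :: "real^'d^'e \<Rightarrow> complex^'d^'e" where
  "cmat M = (\<chi> i j. complex_of_real (M $ i $ j))"

definition window :: "(int \<Rightarrow> 'a) \<Rightarrow> int \<Rightarrow> int \<Rightarrow> 'a" where
  "window u j = (\<lambda>k. u (j + k))"

definition pderiv_slot ::
  "(real \<Rightarrow> (int \<Rightarrow> real^'d) \<Rightarrow> real^'d) \<Rightarrow> real \<Rightarrow> (int \<Rightarrow> real^'d::finite) \<Rightarrow> int \<Rightarrow> real^'d^'d" where
  "pderiv_slot F \<nu> u k = jacobian (\<lambda>v. F \<nu> (u(k := v))) (at (u k))"

definition scheme :: "(real \<Rightarrow> (int \<Rightarrow> real^'d) \<Rightarrow> real^'d) \<Rightarrow> real \<Rightarrow> (int \<Rightarrow> real^'d) \<Rightarrow> int \<Rightarrow> real^'d" where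
  "scheme F \<nu> u j = u j - \<nu> *\<^sub>R (F \<nu> (window u (j + 1)) - F \<nu> (window u j))"

definition Acoef :: "nat \<Rightarrow> nat \<Rightarrow> (int \<Rightarrow> int \<Rightarrow> real^'d^'d) \<Rightarrow> int \<Rightarrow> int \<Rightarrow> real^'d^'d" where
  "Acoef p q B j k =
     (if k = int q then - B (j + 1) (int q - 1)
      else if k = - int p then B j (- int p)
      else if - int p < k \<and> k < int q then
        (if k = 0 then mat 1 else 0) + B j k - B (j + 1) (k - 1)
      else 0)"

definition l2 :: "(int \<Rightarrow> complex^'d::finite) \<Rightarrow> bool" where
  "l2 h \<longleftrightarrow> (\<lambda>j. (norm (h j))\<^sup>2) summable_on UNIV"

definition Lop :: "nat \<Rightarrow> nat \<Rightarrow> (int \<Rightarrow> int \<Rightarrow> complex^'d^'d) \<Rightarrow> (int \<Rightarrow> complex^'d) \<Rightarrow> int \<Rightarrow> complex^'d::finite" where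
  "Lop p q A h j = (\<Sum>k\<in>{- int p..int q}. A j k *v h (j + k))"

text \<open>Resolvent set of \<open>\<L>\<close> acting on \<open>\<ell>^2(\<int>,\<complex>^d)\<close>: \<open>z Id - \<L>\<close> is bijective
 (the inverse is then bounded by the open mapping theorem, \<open>\<L>\<close> being bounded).\<close>
definition resolvent_set :: "nat \<Rightarrow> nat \<Rightarrow> (int \<Rightarrow> int \<Rightarrow> complex^'d^'d) \<Rightarrow> complex set" where
  "resolvent_set p q A =
     {z. \<forall>g::int \<Rightarrow> complex^'d::finite. l2 g \<longrightarrow>
            (\<exists>!h. l2 h \<and> (\<forall>j. z *s h j - Lop p q A h j = g j))}"

definition spectrum_op :: "nat \<Rightarrow> nat \<Rightarrow> (int \<Rightarrow> int \<Rightarrow> complex^'d::finite^'d) \<Rightarrow> complex set" where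
  "spectrum_op p q A = - resolvent_set p q A"

definition unbounded_component :: "complex set \<Rightarrow> complex set" where
  "unbounded_component S =
     \<Union>{connected_component_set S x | x. x \<in> S \<and> \<not> bounded (connected_component_set S x)}"

text \<open>Euclidean norm of \<open>W(z,j_0,j,e) = (G(z,j_0,j+q-1)e,\<dots>,G(z,j_0,j-p)e)\<close>.\<close>
definition Wnorm :: "nat \<Rightarrow> nat \<Rightarrow> (int \<Rightarrow> complex^'d::finite) \<Rightarrow> int \<Rightarrow> real" where
  "Wnorm p q g j = sqrt (\<Sum>m\<in>{j - int p..j + int q - 1}. (norm (g m))\<^sup>2)"

definition Bprof :: "(real \<Rightarrow> (int \<Rightarrow> real^'d) \<Rightarrow> real^'d) \<Rightarrow> real \<Rightarrow> (int \<Rightarrow> real^'d::finite) \<Rightarrow> int \<Rightarrow> int \<Rightarrow> real^'d^'d" where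
  "Bprof F \<nu> ub j k = \<nu> *\<^sub>R pderiv_slot F \<nu> (window ub j) k"

definition Bconst :: "(real \<Rightarrow> (int \<Rightarrow> real^'d) \<Rightarrow> real^'d) \<Rightarrow> real \<Rightarrow> real^'d::finite \<Rightarrow> int \<Rightarrow> int \<Rightarrow> real^'d^'d" where
  "Bconst F \<nu> u j k = \<nu> *\<^sub>R pderiv_slot F \<nu> (\<lambda>_. u) k"

definition Fsym :: "nat \<Rightarrow> nat \<Rightarrow> (int \<Rightarrow> real) \<Rightarrow> complex \<Rightarrow> complex" where
  "Fsym p q lam \<kappa> = (\<Sum>k\<in>{- int p..int q}. complex_of_real (lam k) * \<kappa> powi k)"

end

theory Submission
  imports Defs
begin


definition l2g :: "(int \<Rightarrow> 'a::real_normed_vector) \<Rightarrow> bool" where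
  "l2g h \<longleftrightarrow> (\<lambda>j. (norm (h j))\<^sup>2) summable_on UNIV"

definition nrm :: "(int \<Rightarrow> 'a::real_normed_vector) \<Rightarrow> real" where
  "nrm h = sqrt (\<Sum>\<^sub>\<infinity>j. (norm (h j))\<^sup>2)"

lemma nrm_nonneg: "0 \<le> nrm h"
  unfolding nrm_def by (simp add: infsum_nonneg)

lemma l2g_fin_le:
  assumes "l2g h" shows "L2_set (\<lambda>j. norm (h j)) F \<le> nrm h"
proof (cases "finite F")
  case True
  have "(\<Sum>j\<in>F. (norm (h j))\<^sup>2) \<le> (\<Sum>\<^sub>\<infinity>j. (norm (h j))\<^sup>2)"
    using assms True unfolding l2g_def by (intro finite_sum_le_infsum) auto
  then show ?thesis unfolding L2_set_def nrm_def by simp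
qed (simp add: nrm_nonneg)

lemma l2g_by_fin:
  assumes "\<And>F. finite F \<Longrightarrow> L2_set (\<lambda>j. norm (h j)) F \<le> B"
  shows "l2g h \<and> nrm h \<le> B"
proof -
  have B0: "0 \<le> B" using assms[of "{}"] by simp
  have sq: "(\<Sum>j\<in>F. (norm (h j))\<^sup>2) \<le> B\<^sup>2" if "finite F" for F
  proof -
    have "sqrt (\<Sum>j\<in>F. (norm (h j))\<^sup>2) \<le> B" using assms[OF that] by (simp add: L2_set_def)
    moreover have "0 \<le> (\<Sum>j\<in>F. (norm (h j))\<^sup>2)" by (simp add: sum_nonneg)
    ultimately have "(sqrt (\<Sum>j\<in>F. (norm (h j))\<^sup>2))\<^sup>2 \<le> B\<^sup>2" by (intro power_mono) auto
    then show ?thesis using \<open>0 \<le> (\<Sum>j\<in>F. (norm (h j))\<^sup>2)\<close> by simp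
  qed
  have sm: "(\<lambda>j. (norm (h j))\<^sup>2) summable_on UNIV"
    by (rule nonneg_bdd_above_summable_on) (auto intro!: bdd_aboveI[where M="B\<^sup>2"] sq)
  have "(\<Sum>\<^sub>\<infinity>j. (norm (h j))\<^sup>2) \<le> B\<^sup>2"
    using sm sq by (intro infsum_le_finite_sums) auto
  then have "nrm h \<le> B" unfolding nrm_def using B0 by (simp add: real_sqrt_le_iff real_le_lsqrt)
  with sm show ?thesis unfolding l2g_def by simp
qed

lemma l2g_pointwise: "l2g h \<Longrightarrow> norm (h j) \<le> nrm h"
  using l2g_fin_le[of h "{j}"] by simp

lemma l2g_add: assumes "l2g f" "l2g g"
  shows "l2g (\<lambda>j. f j + g j) \<and> nrm (\<lambda>j. f j + g j) \<le> nrm f + nrm g"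
proof (rule l2g_by_fin)
  fix F :: "int set" assume "finite F"
  have "L2_set (\<lambda>j. norm (f j + g j)) F \<le> L2_set (\<lambda>j. norm (f j) + norm (g j)) F"
    by (rule L2_set_mono) (auto intro: norm_triangle_ineq)
  also have "\<dots> \<le> L2_set (\<lambda>j. norm (f j)) F + L2_set (\<lambda>j. norm (g j)) F"
    by (rule L2_set_triangle_ineq)
  also have "\<dots> \<le> nrm f + nrm g" using assms by (intro add_mono l2g_fin_le)
  finally show "L2_set (\<lambda>j. norm (f j + g j)) F \<le> nrm f + nrm g" .
qed

lemma l2g_dom: assumes "l2g g" "\<And>j. norm (f j) \<le> norm (g j)"
  shows "l2g f \<and> nrm f \<le> nrm g"
proof (rule l2g_by_fin)
  fix F :: "int set" assume "finite F"
  have "L2_set (\<lambda>j. norm (f j)) F \<le> L2_set (\<lambda>j. norm (g j)) F"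
    by (rule L2_set_mono) (auto intro: assms)
  also have "\<dots> \<le> nrm g" using assms by (intro l2g_fin_le)
  finally show "L2_set (\<lambda>j. norm (f j)) F \<le> nrm g" .
qed

lemma l2g_scale: assumes "l2g g" "0 \<le> c" "\<And>j. norm (f j) \<le> c * norm (g j)"
  shows "l2g f \<and> nrm f \<le> c * nrm g"
proof (rule l2g_by_fin)
  fix F :: "int set" assume "finite F"
  have "L2_set (\<lambda>j. norm (f j)) F \<le> L2_set (\<lambda>j. c * norm (g j)) F"
    by (rule L2_set_mono) (auto intro: assms)
  also have "\<dots> = c * L2_set (\<lambda>j. norm (g j)) F" using assms by (simp add: L2_set_right_distrib)
  also have "\<dots> \<le> c * nrm g" using assms by (intro mult_left_mono l2g_fin_le)
  finally show "L2_set (\<lambda>j. norm (f j)) F \<le> c * nrm g" .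
qed

lemma l2g_shift: assumes "l2g g"
  shows "l2g (\<lambda>j. g (j + k)) \<and> nrm (\<lambda>j. g (j + k)) \<le> nrm g"
proof (rule l2g_by_fin)
  fix F :: "int set" assume "finite F"
  have "L2_set (\<lambda>j. norm (g (j + k))) F = L2_set (\<lambda>j. norm (g j)) ((\<lambda>j. j + k) ` F)"
    unfolding L2_set_def by (subst sum.reindex) (auto simp: inj_on_def)
  also have "\<dots> \<le> nrm g" using assms by (intro l2g_fin_le)
  finally show "L2_set (\<lambda>j. norm (g (j + k))) F \<le> nrm g" .
qed

lemma l2g_sum: assumes "finite K" "\<And>k. k \<in> K \<Longrightarrow> l2g (f k)"
  shows "l2g (\<lambda>j. \<Sum>k\<in>K. f k j) \<and> nrm (\<lambda>j. \<Sum>k\<in>K. f k j) \<le> (\<Sum>k\<in>K. nrm (f k))"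
  using assms
proof (induction K rule: finite_induct)
  case empty
  then show ?case by (intro l2g_by_fin) (auto simp: L2_set_0')
next
  case (insert x F)
  then have a: "l2g (f x)" and b: "l2g (\<lambda>j. \<Sum>k\<in>F. f k j)" "nrm (\<lambda>j. \<Sum>k\<in>F. f k j) \<le> (\<Sum>k\<in>F. nrm (f k))" by auto
  from l2g_add[OF a b(1)] b(2) insert(1,2) show ?case by auto
qed

lemma l2g_band:
  fixes u :: "int \<Rightarrow> 'a::real_normed_vector" and R :: "int \<Rightarrow> 'b::real_normed_vector"
  assumes "l2g u" "finite K" "0 \<le> M" "\<And>j. norm (R j) \<le> (\<Sum>k\<in>K. M * norm (u (j + k)))"
  shows "l2g R \<and> nrm R \<le> real (card K) * M * nrm u"
proof -
  have s: "l2g (\<lambda>j. M * norm (u (j + k))) \<and> nrm (\<lambda>j. M * norm (u (j + k))) \<le> M * nrm u" for k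
  proof -
    have "l2g (\<lambda>j. u (j + k)) \<and> nrm (\<lambda>j. u (j + k)) \<le> nrm u" using l2g_shift[OF assms(1)] .
    moreover have "l2g (\<lambda>j. M * norm (u (j + k))) \<and> nrm (\<lambda>j. M * norm (u (j + k))) \<le> M * nrm (\<lambda>j. u (j + k))"
      using calculation assms(3) by (intro l2g_scale) auto
    ultimately show ?thesis using assms(3) by (meson mult_left_mono order_trans)
  qed
  have S: "l2g (\<lambda>j. \<Sum>k\<in>K. M * norm (u (j + k))) \<and> nrm (\<lambda>j. \<Sum>k\<in>K. M * norm (u (j + k))) \<le> (\<Sum>k\<in>K. M * nrm u)"
    using l2g_sum[OF assms(2), of "\<lambda>k j. M * norm (u (j + k))"] s
    by (meson order_trans sum_mono)
  have "l2g R \<and> nrm R \<le> nrm (\<lambda>j. \<Sum>k\<in>K. M * norm (u (j + k)))"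
    using S assms(3,4) by (intro l2g_dom) (auto simp: sum_nonneg)
  with S show ?thesis by auto
qed


lemma l2g_neg: "l2g f \<Longrightarrow> l2g (\<lambda>j. - f j) \<and> nrm (\<lambda>j. - f j) \<le> nrm f"
  by (rule l2g_dom) auto

lemma nrm_neg: "nrm (\<lambda>j. - f j) = nrm f"
  by (simp add: nrm_def)

lemma l2g_diff: assumes "l2g f" "l2g g"
  shows "l2g (\<lambda>j. f j - g j) \<and> nrm (\<lambda>j. f j - g j) \<le> nrm f + nrm g"
  using l2g_add[OF assms(1) l2g_neg[OF assms(2), THEN conjunct1]] nrm_neg[of g] by simp

lemma nrm_zero_iff: "l2g f \<Longrightarrow> nrm f = 0 \<longleftrightarrow> f = (\<lambda>j. 0)"
proof
  assume "l2g f" "nrm f = 0"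
  then have "norm (f j) \<le> 0" for j using l2g_pointwise[of f j] by simp
  then show "f = (\<lambda>j. 0)" by (simp add: fun_eq_iff)
next
  assume "f = (\<lambda>j. 0)" then show "nrm f = 0" by (simp add: nrm_def)
qed

lemma l2_metric: "Metric_space {h::int \<Rightarrow> 'a::real_normed_vector. l2g h} (\<lambda>x y. nrm (\<lambda>j. x j - y j))"
proof
  fix x y z :: "int \<Rightarrow> 'a"
  show "0 \<le> nrm (\<lambda>j. x j - y j)" by (rule nrm_nonneg)
  show "nrm (\<lambda>j. x j - y j) = nrm (\<lambda>j. y j - x j)"
    using nrm_neg[of "\<lambda>j. x j - y j"] by simp
  assume xyz: "x \<in> {h. l2g h}" "y \<in> {h. l2g h}"
  then have l: "l2g (\<lambda>j. x j - y j)" using l2g_diff by blast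
  show "nrm (\<lambda>j. x j - y j) = 0 \<longleftrightarrow> x = y"
    using nrm_zero_iff[OF l] by (auto simp: fun_eq_iff)
  assume "z \<in> {h. l2g h}"
  then have l2: "l2g (\<lambda>j. y j - z j)" using xyz l2g_diff by blast
  show "nrm (\<lambda>j. x j - z j) \<le> nrm (\<lambda>j. x j - y j) + nrm (\<lambda>j. y j - z j)"
    using l2g_add[OF l l2] by simp
qed

lemma l2_mcomplete:
  "Metric_space.mcomplete {h::int \<Rightarrow> 'a::banach. l2g h} (\<lambda>x y. nrm (\<lambda>j. x j - y j))"
proof -
  interpret Metric_space "{h::int \<Rightarrow> 'a::banach. l2g h}" "(\<lambda>x y. nrm (\<lambda>j. x j - y j))"
    by (rule l2_metric)
  show ?thesis unfolding mcomplete_def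
  proof (intro allI impI)
    fix \<sigma> :: "nat \<Rightarrow> int \<Rightarrow> 'a" assume C: "MCauchy \<sigma>"
    then have M: "\<And>n. l2g (\<sigma> n)" and Cy: "\<And>e. e > 0 \<Longrightarrow> \<exists>N. \<forall>n n'. N \<le> n \<longrightarrow> N \<le> n' \<longrightarrow> nrm (\<lambda>j. \<sigma> n j - \<sigma> n' j) < e"
      unfolding MCauchy_def by auto
    have pc: "Cauchy (\<lambda>n. \<sigma> n j)" for j
    proof (rule metric_CauchyI)
      fix e :: real assume "e > 0"
      then obtain N where N: "\<forall>n n'. N \<le> n \<longrightarrow> N \<le> n' \<longrightarrow> nrm (\<lambda>j. \<sigma> n j - \<sigma> n' j) < e" using Cy by blast
      show "\<exists>N. \<forall>m\<ge>N. \<forall>n\<ge>N. dist (\<sigma> m j) (\<sigma> n j) < e"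
      proof (intro exI allI impI)
        fix m n assume "N \<le> m" "N \<le> n"
        then have "nrm (\<lambda>j. \<sigma> m j - \<sigma> n j) < e" using N by blast
        moreover have "norm (\<sigma> m j - \<sigma> n j) \<le> nrm (\<lambda>j. \<sigma> m j - \<sigma> n j)"
          using l2g_pointwise[of "\<lambda>j. \<sigma> m j - \<sigma> n j" j] l2g_diff[OF M M] by blast
        ultimately show "dist (\<sigma> m j) (\<sigma> n j) < e" by (simp add: dist_norm)
      qed
    qed
    define h where "h j = lim (\<lambda>n. \<sigma> n j)" for j
    have hl: "(\<lambda>n. \<sigma> n j) \<longlonglongrightarrow> h j" for j
      using pc[of j] unfolding h_def by (simp add: Cauchy_convergent_iff convergent_LIMSEQ_iff)
    have key: "\<exists>N. \<forall>n\<ge>N. l2g (\<lambda>j. \<sigma> n j - h j) \<and> nrm (\<lambda>j. \<sigma> n j - h j) \<le> e" if "e > 0" for e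
    proof -
      obtain N where N: "\<forall>n n'. N \<le> n \<longrightarrow> N \<le> n' \<longrightarrow> nrm (\<lambda>j. \<sigma> n j - \<sigma> n' j) < e" using Cy \<open>e>0\<close> by blast
      show ?thesis
      proof (intro exI allI impI)
        fix n assume "N \<le> n"
        show "l2g (\<lambda>j. \<sigma> n j - h j) \<and> nrm (\<lambda>j. \<sigma> n j - h j) \<le> e"
        proof (rule l2g_by_fin)
          fix F :: "int set" assume "finite F"
          have t: "(\<lambda>n'. L2_set (\<lambda>j. norm (\<sigma> n j - \<sigma> n' j)) F) \<longlonglongrightarrow> L2_set (\<lambda>j. norm (\<sigma> n j - h j)) F"
            unfolding L2_set_def
            by (intro tendsto_intros hl)
          have "\<forall>n'\<ge>N. L2_set (\<lambda>j. norm (\<sigma> n j - \<sigma> n' j)) F \<le> e"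
          proof (intro allI impI)
            fix n' assume "N \<le> n'"
            have "L2_set (\<lambda>j. norm (\<sigma> n j - \<sigma> n' j)) F \<le> nrm (\<lambda>j. \<sigma> n j - \<sigma> n' j)"
              using l2g_fin_le l2g_diff[OF M M] by blast
            also have "\<dots> < e" using N \<open>N \<le> n\<close> \<open>N \<le> n'\<close> by blast
            finally show "L2_set (\<lambda>j. norm (\<sigma> n j - \<sigma> n' j)) F \<le> e" by simp
          qed
          then show "L2_set (\<lambda>j. norm (\<sigma> n j - h j)) F \<le> e"
            using t by (intro LIMSEQ_le_const2) auto
        qed
      qed
    qed
    obtain N1 where N1: "\<forall>n\<ge>N1. l2g (\<lambda>j. \<sigma> n j - h j)" using key[of 1] by auto
    have "l2g (\<lambda>j. \<sigma> N1 j - (\<sigma> N1 j - h j))"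
      using l2g_diff[OF M N1[rule_format, OF order_refl]] by blast
    then have hM: "l2g h" by simp
    have "limitin mtopology \<sigma> h sequentially"
      unfolding limit_metric_sequentially
    proof (intro conjI allI impI)
      show "h \<in> {h. l2g h}" using hM by simp
      fix e :: real assume "e > 0"
      then obtain N where "\<forall>n\<ge>N. l2g (\<lambda>j. \<sigma> n j - h j) \<and> nrm (\<lambda>j. \<sigma> n j - h j) \<le> e/2"
        using key[of "e/2"] by auto
      then show "\<exists>N. \<forall>n\<ge>N. \<sigma> n \<in> {h. l2g h} \<and> nrm (\<lambda>j. \<sigma> n j - h j) < e"
        using M \<open>e>0\<close> by (intro exI[of _ N]) force
    qed
    then show "\<exists>x. limitin mtopology \<sigma> x sequentially" by blast
  qed
qed


lemma pc_lemma:
  fixes hs :: "nat \<Rightarrow> int \<Rightarrow> 'a::euclidean_space"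
  assumes "\<And>m. l2g (hs m)" "\<And>m. nrm (hs m) \<le> B"
  shows "\<exists>r h. strict_mono r \<and> l2g h \<and> nrm h \<le> B \<and> (\<forall>j. (\<lambda>m. hs (r m) j) \<longlonglongrightarrow> h j)"
proof -
  define S where "S = PiE (UNIV::int set) (\<lambda>_. cball (0::'a) B)"
  have "compactin (product_topology (\<lambda>_. euclidean) UNIV) S"
    unfolding S_def by (subst compactin_PiE) auto
  then have "compact S" by (simp add: euclidean_product_topology)
  then have sc: "seq_compact S" by (rule compact_imp_seq_compact)
  have inS: "hs m \<in> S" for m
  proof -
    have "norm (hs m j) \<le> B" for j using order_trans[OF l2g_pointwise[OF assms(1)] assms(2)] .
    then show ?thesis unfolding S_def by auto
  qed
  obtain h r where hS: "h \<in> S" and r: "strict_mono r" and lim: "(hs \<circ> r) \<longlonglongrightarrow> h"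
  proof -
    have "\<exists>l\<in>S. \<exists>r::nat\<Rightarrow>nat. strict_mono r \<and> (hs \<circ> r) \<longlonglongrightarrow> l"
      using sc[unfolded seq_compact_def, rule_format, of hs] inS by simp
    then obtain l r where "l \<in> S" "strict_mono r" "(hs \<circ> r) \<longlonglongrightarrow> l" by blast
    then show ?thesis using that by simp
  qed
  have pw: "(\<lambda>m. hs (r m) j) \<longlonglongrightarrow> h j" for j
  proof -
    have c: "continuous_on UNIV (\<lambda>x::int \<Rightarrow> 'a. x j)" by simp
    have "isCont (\<lambda>x::int \<Rightarrow> 'a. x j) h"
      using c by (metis UNIV_I continuous_on_eq_continuous_at open_UNIV)
    from isCont_tendsto_compose[OF this lim] show ?thesis by (simp add: o_def)
  qed
  have "l2g h \<and> nrm h \<le> B"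
  proof (rule l2g_by_fin)
    fix F :: "int set" assume "finite F"
    have t: "(\<lambda>m. L2_set (\<lambda>j. norm (hs (r m) j)) F) \<longlonglongrightarrow> L2_set (\<lambda>j. norm (h j)) F"
      unfolding L2_set_def by (intro tendsto_intros pw)
    have "\<forall>m. L2_set (\<lambda>j. norm (hs (r m) j)) F \<le> B"
      using l2g_fin_le[OF assms(1)] assms(2) by (meson order_trans)
    then show "L2_set (\<lambda>j. norm (h j)) F \<le> B" using t by (intro LIMSEQ_le_const2) auto
  qed
  then show ?thesis using r pw by blast
qed

lemma bounded_below_abstract:
  fixes T :: "(int \<Rightarrow> 'a::euclidean_space) \<Rightarrow> int \<Rightarrow> 'a"
  assumes lin: "\<And>h g. T (\<lambda>j. h j - g j) = (\<lambda>j. T h j - T g j)"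
    and lin2: "\<And>h c. T (\<lambda>j. c *\<^sub>R h j) = (\<lambda>j. c *\<^sub>R T h j)"
    and bnd: "\<And>h. l2g h \<Longrightarrow> l2g (T h)"
    and surj: "\<And>g. l2g g \<Longrightarrow> \<exists>h. l2g h \<and> T h = g"
    and inj: "\<And>h. l2g h \<Longrightarrow> T h = (\<lambda>j. 0) \<Longrightarrow> h = (\<lambda>j. 0)"
    and cont: "\<And>hs h j. (\<forall>j. (\<lambda>m. hs m j) \<longlonglongrightarrow> h j) \<Longrightarrow> (\<lambda>m. T (hs m) j) \<longlonglongrightarrow> T h j"
  shows "\<exists>\<delta>>0. \<forall>h. l2g h \<longrightarrow> \<delta> * nrm h \<le> nrm (T h)"
proof -
  interpret Metric_space "{h::int \<Rightarrow> 'a. l2g h}" "(\<lambda>x y. nrm (\<lambda>j. x j - y j))"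
    by (rule l2_metric)
  have mc: mcomplete by (rule l2_mcomplete)
  define K where "K n = {g. l2g g \<and> (\<exists>h. l2g h \<and> T h = g \<and> nrm h \<le> real n)}" for n :: nat
  have Kcl: "closedin mtopology (K n)" for n
    unfolding metric_closedin_iff_sequentially_closed
  proof (intro conjI allI impI)
    show "K n \<subseteq> {h. l2g h}" by (auto simp: K_def)
    fix \<sigma> g assume a: "range \<sigma> \<subseteq> K n \<and> limitin mtopology \<sigma> g sequentially"
    then have "\<forall>m. \<exists>h. l2g h \<and> T h = \<sigma> m \<and> nrm h \<le> real n" by (auto simp: K_def)
    then obtain hs where hs: "\<And>m. l2g (hs m) \<and> T (hs m) = \<sigma> m \<and> nrm (hs m) \<le> real n" by metis
    obtain r h where r: "strict_mono r" and h: "l2g h" "nrm h \<le> real n"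
      and pw: "\<forall>j. (\<lambda>m. hs (r m) j) \<longlonglongrightarrow> h j"
      using pc_lemma[of hs "real n"] hs by blast
    have gM: "l2g g" and lim: "\<forall>e>0. \<exists>N. \<forall>m\<ge>N. l2g (\<sigma> m) \<and> nrm (\<lambda>j. \<sigma> m j - g j) < e"
      using a unfolding limit_metric_sequentially by auto
    have sj: "(\<lambda>m. \<sigma> m j) \<longlonglongrightarrow> g j" for j
    proof (rule LIMSEQ_I)
      fix e :: real assume "e > 0"
      then obtain N where N: "\<forall>m\<ge>N. l2g (\<sigma> m) \<and> nrm (\<lambda>j. \<sigma> m j - g j) < e" using lim by blast
      show "\<exists>N. \<forall>m\<ge>N. norm (\<sigma> m j - g j) < e"
      proof (intro exI allI impI)
        fix m assume "N \<le> m"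
        then have "l2g (\<sigma> m)" "nrm (\<lambda>j. \<sigma> m j - g j) < e" using N by auto
        moreover have "norm (\<sigma> m j - g j) \<le> nrm (\<lambda>j. \<sigma> m j - g j)"
          using l2g_pointwise l2g_diff[OF \<open>l2g (\<sigma> m)\<close> gM] by blast
        ultimately show "norm (\<sigma> m j - g j) < e" by simp
      qed
    qed
    have "T h = g"
    proof
      fix j
      have "(\<lambda>m. T (hs (r m)) j) \<longlonglongrightarrow> T h j" using cont[OF pw] .
      moreover have "(\<lambda>m. T (hs (r m)) j) \<longlonglongrightarrow> g j"
        using LIMSEQ_subseq_LIMSEQ[OF sj r] hs by (simp add: o_def)
      ultimately show "T h j = g j" by (rule LIMSEQ_unique)
    qed
    then show "g \<in> K n" using h gM by (auto simp: K_def)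
  qed
  have U: "\<Union>(range K) = {h. l2g h}"
  proof
    show "\<Union>(range K) \<subseteq> {h. l2g h}" by (auto simp: K_def)
    show "{h. l2g h} \<subseteq> \<Union>(range K)"
    proof
      fix g assume "g \<in> {h::int \<Rightarrow> 'a. l2g h}"
      then obtain h where "l2g h" "T h = g" "l2g g" using surj by auto
      then have "g \<in> K (nat \<lceil>nrm h\<rceil>)" unfolding K_def by (auto intro: real_nat_ceiling_ge)
      then show "g \<in> \<Union>(range K)" by blast
    qed
  qed
  have "\<exists>n. mtopology interior_of (K n) \<noteq> {}"
  proof (rule ccontr)
    assume "\<not> ?thesis"
    then have "mtopology interior_of \<Union>(range K) = {}"
      using Kcl by (intro metric_Baire_category_alt mc) auto
    moreover have "(\<lambda>j. 0::'a) \<in> {h. l2g h}" using l2g_by_fin[of "\<lambda>j. 0::'a" 0] by (auto simp: L2_set_0')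
    moreover have "mtopology interior_of \<Union>(range K) = {h. l2g h}"
      using interior_of_topspace[of mtopology] U by simp
    ultimately show False by blast
  qed
  then obtain n g0 where g0: "g0 \<in> mtopology interior_of (K n)" by blast
  have op: "openin mtopology (mtopology interior_of (K n))" by simp
  obtain r where r0: "r > 0" "mball g0 r \<subseteq> mtopology interior_of (K n)"
    using op[unfolded openin_mtopology] g0 by blast
  have r: "r > 0" "mball g0 r \<subseteq> K n" using r0 interior_of_subset[of mtopology "K n"] by auto
  have g0M: "l2g g0" using g0 interior_of_subset[of mtopology "K n"] unfolding K_def by auto
  have T0: "T (\<lambda>j. 0) = (\<lambda>j. 0)" using lin[of "\<lambda>j. 0" "\<lambda>j. 0"] by simp
  have main: "nrm h \<le> (4 * (real n + 1) / r) * nrm (T h)" if hl: "l2g h" for h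
  proof -
    define g where "g = T h"
    have gl: "l2g g" unfolding g_def using bnd[OF hl] .
    show ?thesis
    proof (cases "nrm g = 0")
      case True
      then have "T h = (\<lambda>j. 0)" using nrm_zero_iff[OF gl] g_def by simp
      then have "h = (\<lambda>j. 0)" using inj hl by blast
      then have "nrm h = 0" by (simp add: nrm_def)
      then show ?thesis using nrm_nonneg[of "T h"] r by simp
    next
      case False
      then have gp: "nrm g > 0" using nrm_nonneg[of g] by simp
      define t where "t = r / (2 * nrm g)"
      have tp: "t > 0" unfolding t_def using gp r by simp
      define g' where "g' = (\<lambda>j. g0 j + t *\<^sub>R g j)"
      have tg: "l2g (\<lambda>j. t *\<^sub>R g j) \<and> nrm (\<lambda>j. t *\<^sub>R g j) \<le> t * nrm g"
        using gl tp by (intro l2g_scale) auto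
      have g'l: "l2g g'" unfolding g'_def using l2g_add[OF g0M tg[THEN conjunct1]] by blast
      have "nrm (\<lambda>j. g0 j - g' j) = nrm (\<lambda>j. t *\<^sub>R g j)"
        using nrm_neg[of "\<lambda>j. t *\<^sub>R g j"] unfolding g'_def by simp
      also have "\<dots> \<le> t * nrm g" using tg by simp
      also have "\<dots> = r / 2" unfolding t_def using gp by (simp add: field_simps)
      also have "\<dots> < r" using r by simp
      finally have "g' \<in> mball g0 r" using g0M g'l by (simp add: in_mball)
      then have "g' \<in> K n" using r by blast
      then have "\<exists>h. l2g h \<and> T h = g' \<and> nrm h \<le> real n" unfolding K_def by simp
      then obtain h1 where h1: "l2g h1" "T h1 = g'" "nrm h1 \<le> real n" by blast
      have "nrm (\<lambda>j. g0 j - g0 j) = 0" by (simp add: nrm_def)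
      then have "g0 \<in> mball g0 r" using r g0M by (simp add: in_mball)
      then have "g0 \<in> K n" using r by blast
      then have "\<exists>h. l2g h \<and> T h = g0 \<and> nrm h \<le> real n" unfolding K_def by simp
      then obtain h0 where h0: "l2g h0" "T h0 = g0" "nrm h0 \<le> real n" by blast
      have d: "l2g (\<lambda>j. h1 j - h0 j) \<and> nrm (\<lambda>j. h1 j - h0 j) \<le> nrm h1 + nrm h0"
        using l2g_diff[OF h1(1) h0(1)] .
      have th: "l2g (\<lambda>j. t *\<^sub>R h j)" using l2g_scale[OF hl, of t "\<lambda>j. t *\<^sub>R h j"] tp by auto
      have "T (\<lambda>j. (h1 j - h0 j) - t *\<^sub>R h j) = (\<lambda>j. 0)"
        unfolding lin lin2 h1 h0 g'_def g_def by simp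
      then have "(\<lambda>j. (h1 j - h0 j) - t *\<^sub>R h j) = (\<lambda>j. 0)"
        using inj l2g_diff[OF d[THEN conjunct1] th] by blast
      then have eq: "(\<lambda>j. h1 j - h0 j) = (\<lambda>j. t *\<^sub>R h j)" by (simp add: fun_eq_iff)
      have "nrm h \<le> (1/t) * nrm (\<lambda>j. t *\<^sub>R h j)"
        using l2g_scale[OF th, of "1/t" h] tp by auto
      also have "\<dots> \<le> (1/t) * (2 * real n)" using d h1 h0 eq tp by (intro mult_left_mono) auto
      also have "\<dots> = 4 * real n / r * nrm g" unfolding t_def using gp r by (simp add: field_simps)
      also have "\<dots> \<le> 4 * (real n + 1) / r * nrm g" using gp r by (intro mult_right_mono divide_right_mono) auto
      finally show ?thesis unfolding g_def .
    qed
  qed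
  show ?thesis
  proof (intro exI conjI allI impI)
    show "r / (4 * (real n + 1)) > 0" using r by simp
    fix h :: "int \<Rightarrow> 'a" assume "l2g h"
    from main[OF this] show "r / (4 * (real n + 1)) * nrm h \<le> nrm (T h)"
      using r by (simp add: field_simps)
  qed
qed



lemma exp_decay_lim:
  assumes "c > 0" shows "(\<lambda>n::nat. C * exp (- c * (real n + i))) \<longlonglongrightarrow> 0"
proof -
  have "(\<lambda>n::nat. (C * exp (- c * i)) * exp (- c) ^ n) \<longlonglongrightarrow> (C * exp (- c * i)) * 0"
    using assms by (intro tendsto_mult tendsto_const LIMSEQ_power_zero) simp
  moreover have "(\<lambda>n::nat. C * exp (- c * (real n + i))) = (\<lambda>n. C * exp (- c * i) * exp (- c) ^ n)"
    by (simp add: exp_of_nat_mult[symmetric] exp_add[symmetric] algebra_simps)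
  ultimately show ?thesis by simp
qed

lemma tendsto_fun_pointwise:
  fixes f :: "nat \<Rightarrow> int \<Rightarrow> 'a::topological_space"
  assumes "\<And>i. (\<lambda>n. f n i) \<longlonglongrightarrow> l i"
  shows "f \<longlonglongrightarrow> l"
proof -
  have "limitin (product_topology (\<lambda>_. euclidean) UNIV) f l sequentially"
    using assms by (subst limitin_componentwise) auto
  then show ?thesis by (simp add: euclidean_product_topology)
qed

lemma bounded_two_sided:
  fixes X :: "int \<Rightarrow> 'a::real_normed_vector"
  assumes "convergent (\<lambda>n::nat. X (int n))" "convergent (\<lambda>n::nat. X (- int n))"
  shows "\<exists>B. \<forall>j. norm (X j) \<le> B"
proof -
  obtain K1 where K1: "\<And>n. norm (X (int n)) \<le> K1"
    using convergent_imp_Bseq[OF assms(1)] unfolding Bseq_def by (meson less_imp_le)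
  obtain K2 where K2: "\<And>n. norm (X (- int n)) \<le> K2"
    using convergent_imp_Bseq[OF assms(2)] unfolding Bseq_def by (meson less_imp_le)
  have "norm (X j) \<le> max K1 K2" for j
  proof (cases "j \<ge> 0")
    case True
    then have "j = int (nat j)" by simp
    then show ?thesis using K1[of "nat j"] by (metis max.coboundedI1)
  next
    case False
    then have "j = - int (nat (- j))" by simp
    then show ?thesis using K2[of "nat (-j)"] by (metis max.coboundedI2)
  qed
  then show ?thesis by blast
qed

lemma coef_bound:
  fixes F :: "real \<Rightarrow> (int \<Rightarrow> real^'d::finite) \<Rightarrow> real^'d" and ub :: "int \<Rightarrow> real^'d"
  assumes F_C1: "\<forall>k\<in>{- int p..int q - 1}.
                 continuous_on {u. \<forall>i\<in>{- int p..int q - 1}. u i \<in> V} (\<lambda>u. pderiv_slot F \<nu> u k)"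
    and ub_V: "\<forall>j. ub j \<in> V" and um_V: "um \<in> V" and up_V: "up \<in> V"
    and ub_lim: "\<exists>C (c::real). c > 0 \<and> (\<forall>j::int.
                    (j \<ge> 0 \<longrightarrow> norm (ub j - up) \<le> C * exp (- c * \<bar>j\<bar>)) \<and>
                    (j \<le> 0 \<longrightarrow> norm (ub j - um) \<le> C * exp (- c * \<bar>j\<bar>)))"
  shows "\<exists>B. \<forall>j. \<forall>k\<in>{- int p..int q - 1}. norm (Bprof F \<nu> ub j k) \<le> B"
proof -
  obtain C c :: real where c: "c > 0" and Cp: "\<And>j::int. j \<ge> 0 \<Longrightarrow> norm (ub j - up) \<le> C * exp (- c * \<bar>j\<bar>)"
    and Cm: "\<And>j::int. j \<le> 0 \<Longrightarrow> norm (ub j - um) \<le> C * exp (- c * \<bar>j\<bar>)"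
    using ub_lim by blast
  define S where "S = {u::int \<Rightarrow> real^'d. \<forall>i\<in>{- int p..int q - 1}. u i \<in> V}"
  have winS: "window ub j \<in> S" for j using ub_V by (simp add: S_def window_def)
  have limp: "(\<lambda>n::nat. window ub (int n)) \<longlonglongrightarrow> (\<lambda>_. up)"
  proof (rule tendsto_fun_pointwise)
    fix i :: int
    have ev: "\<forall>\<^sub>F n in sequentially. norm (ub (int n + i) - up) \<le> C * exp (- c * (real n + i))"
    proof (rule eventually_sequentiallyI[of "nat \<bar>i\<bar>"])
      fix n assume "nat \<bar>i\<bar> \<le> n"
      then have "int n + i \<ge> 0" by linarith
      from Cp[OF this] show "norm (ub (int n + i) - up) \<le> C * exp (- c * (real n + i))"
        using \<open>int n + i \<ge> 0\<close> by simp
    qed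
    have "(\<lambda>n. ub (int n + i) - up) \<longlonglongrightarrow> 0"
      by (rule Lim_null_comparison[OF ev exp_decay_lim[OF c]])
    then show "(\<lambda>n. window ub (int n) i) \<longlonglongrightarrow> up"
      unfolding window_def by (rule LIM_zero_cancel)
  qed
  have limm: "(\<lambda>n::nat. window ub (- int n)) \<longlonglongrightarrow> (\<lambda>_. um)"
  proof (rule tendsto_fun_pointwise)
    fix i :: int
    have ev: "\<forall>\<^sub>F n in sequentially. norm (ub (- int n + i) - um) \<le> C * exp (- c * (real n + - i))"
    proof (rule eventually_sequentiallyI[of "nat \<bar>i\<bar>"])
      fix n assume "nat \<bar>i\<bar> \<le> n"
      then have "- int n + i \<le> 0" by linarith
      from Cm[OF this] show "norm (ub (- int n + i) - um) \<le> C * exp (- c * (real n + - i))"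
        using \<open>- int n + i \<le> 0\<close> by simp
    qed
    have "(\<lambda>n. ub (- int n + i) - um) \<longlonglongrightarrow> 0"
      by (rule Lim_null_comparison[OF ev exp_decay_lim[OF c]])
    then show "(\<lambda>n. window ub (- int n) i) \<longlonglongrightarrow> um"
      unfolding window_def by (rule LIM_zero_cancel)
  qed
  have each: "\<exists>B. \<forall>j. norm (Bprof F \<nu> ub j k) \<le> B" if k: "k \<in> {- int p..int q - 1}" for k
  proof -
    have cont: "continuous_on S (\<lambda>u. pderiv_slot F \<nu> u k)" using F_C1 k by (simp add: S_def)
    have upS: "(\<lambda>_. up) \<in> S" and umS: "(\<lambda>_. um) \<in> S" using up_V um_V by (auto simp: S_def)
    have "(\<lambda>n. pderiv_slot F \<nu> (window ub (int n)) k) \<longlonglongrightarrow> pderiv_slot F \<nu> (\<lambda>_. up) k"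
      using continuous_on_tendsto_compose[OF cont limp upS] winS by (simp add: o_def)
    then have c1: "convergent (\<lambda>n. Bprof F \<nu> ub (int n) k)"
      unfolding Bprof_def by (rule convergentI[OF tendsto_scaleR[OF tendsto_const]])
    have "(\<lambda>n. pderiv_slot F \<nu> (window ub (- int n)) k) \<longlonglongrightarrow> pderiv_slot F \<nu> (\<lambda>_. um) k"
      using continuous_on_tendsto_compose[OF cont limm umS] winS by (simp add: o_def)
    then have c2: "convergent (\<lambda>n. Bprof F \<nu> ub (- int n) k)"
      unfolding Bprof_def by (rule convergentI[OF tendsto_scaleR[OF tendsto_const]])
    show ?thesis using bounded_two_sided[OF c1 c2] .
  qed
  then obtain Bf where Bf: "\<And>k j. k \<in> {- int p..int q - 1} \<Longrightarrow> norm (Bprof F \<nu> ub j k) \<le> Bf k"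
    by metis
  have "norm (Bprof F \<nu> ub j k) \<le> (\<Sum>k\<in>{- int p..int q - 1}. \<bar>Bf k\<bar>)" if "k \<in> {- int p..int q - 1}" for j k
  proof -
    have "\<bar>Bf k\<bar> \<le> (\<Sum>k\<in>{- int p..int q - 1}. \<bar>Bf k\<bar>)"
      using that by (intro member_le_sum) auto
    then show ?thesis using Bf[OF that, of j] by linarith
  qed
  then show ?thesis by blast
qed



lemma norm_le_l1_gen: "norm (x::'a::real_normed_vector^'n::finite) \<le> (\<Sum>i\<in>UNIV. norm (x$i))"
  by (simp add: norm_vec_def L2_set_le_sum)

lemma matvec_bound:
  fixes A :: "complex^'n::finite^'m::finite"
  shows "norm (A *v x) \<le> (\<Sum>i\<in>UNIV. \<Sum>j\<in>UNIV. norm (A$i$j)) * norm x"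
proof -
  have "norm (A *v x) \<le> (\<Sum>i\<in>UNIV. norm ((A *v x)$i))" by (rule norm_le_l1_gen)
  also have "\<dots> \<le> (\<Sum>i\<in>UNIV. \<Sum>j\<in>UNIV. norm (A$i$j) * norm x)"
  proof (rule sum_mono)
    fix i
    have "norm ((A *v x)$i) = norm (\<Sum>j\<in>UNIV. A$i$j * x$j)" by (simp add: matrix_vector_mult_def)
    also have "\<dots> \<le> (\<Sum>j\<in>UNIV. norm (A$i$j * x$j))" by (rule norm_sum)
    also have "\<dots> \<le> (\<Sum>j\<in>UNIV. norm (A$i$j) * norm x)"
    proof (rule sum_mono)
      fix j
      have "norm (x$j) \<le> norm x" using Finite_Cartesian_Product.norm_nth_le[of x j] by simp
      then show "norm (A$i$j * x$j) \<le> norm (A$i$j) * norm x" unfolding norm_mult by (rule mult_left_mono) simp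
    qed
    finally show "norm ((A *v x)$i) \<le> (\<Sum>j\<in>UNIV. norm (A$i$j) * norm x)" .
  qed
  also have "\<dots> = (\<Sum>i\<in>UNIV. \<Sum>j\<in>UNIV. norm (A$i$j)) * norm x" by (simp add: sum_distrib_right)
  finally show ?thesis .
qed

lemma cmat_bound:
  fixes M :: "real^'n::finite^'m::finite"
  shows "norm (cmat M *v x) \<le> (real CARD('m) * real CARD('n) * norm M) * norm x"
proof -
  have e: "norm ((cmat M)$i$j) \<le> norm M" for i j
  proof -
    have "norm ((cmat M)$i$j) = norm (M$i$j)" by (simp add: cmat_def)
    also have "\<dots> \<le> norm (M$i)" by (rule Finite_Cartesian_Product.norm_nth_le)
    also have "\<dots> \<le> norm M" by (rule Finite_Cartesian_Product.norm_nth_le)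
    finally show ?thesis .
  qed
  have "(\<Sum>i\<in>UNIV. \<Sum>j\<in>UNIV. norm ((cmat M)$i$j)) \<le> (\<Sum>i\<in>(UNIV::'m set). \<Sum>j\<in>(UNIV::'n set). norm M)"
    by (intro sum_mono e)
  also have "\<dots> = real CARD('m) * real CARD('n) * norm M" by simp
  finally have "(\<Sum>i\<in>UNIV. \<Sum>j\<in>UNIV. norm ((cmat M)$i$j)) \<le> real CARD('m) * real CARD('n) * norm M" .
  then have "(\<Sum>i\<in>UNIV. \<Sum>j\<in>UNIV. norm ((cmat M)$i$j)) * norm x \<le> real CARD('m) * real CARD('n) * norm M * norm x"
    by (rule mult_right_mono) simp
  then show ?thesis using matvec_bound[of "cmat M" x] by linarith
qed

lemma Acoef_bound:
  fixes B :: "int \<Rightarrow> int \<Rightarrow> real^'d::finite^'d"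
  assumes p1: "p \<ge> 1" and q1: "q \<ge> 1" and Bb: "\<And>j k. k \<in> {- int p..int q - 1} \<Longrightarrow> norm (B j k) \<le> b"
  shows "norm (Acoef p q B j k) \<le> norm (mat 1 :: real^'d^'d) + 2 * b"
proof -
  have "- int p \<in> {- int p..int q - 1}" using q1 by simp
  from Bb[OF this, of 0] have b0: "0 \<le> b" using norm_ge_zero order_trans by blast
  have m0: "0 \<le> norm (mat 1 :: real^'d^'d)" by simp
  consider "k = int q" | "k \<noteq> int q" "k = - int p" | "k \<noteq> int q" "k \<noteq> - int p" "- int p < k \<and> k < int q"
    | "k \<noteq> int q" "k \<noteq> - int p" "\<not> (- int p < k \<and> k < int q)" by blast
  then show ?thesis
  proof cases
    case 1
    then have "norm (Acoef p q B j k) = norm (B (j + 1) (int q - 1))" by (simp add: Acoef_def)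
    also have "\<dots> \<le> b" using Bb p1 q1 by simp
    finally show ?thesis using b0 m0 by linarith
  next
    case 2
    then have "norm (Acoef p q B j k) = norm (B j (- int p))" using p1 q1 by (simp add: Acoef_def)
    also have "\<dots> \<le> b" using Bb p1 q1 by simp
    finally show ?thesis using b0 m0 by linarith
  next
    case 3
    then have "norm (Acoef p q B j k) = norm ((if k = 0 then mat 1 else 0) + B j k - B (j + 1) (k - 1))"
      by (simp add: Acoef_def)
    also have "\<dots> \<le> norm (if k = 0 then mat 1 else (0::real^'d^'d)) + norm (B j k) + norm (B (j + 1) (k - 1))"
      by (meson norm_triangle_ineq norm_triangle_ineq4 add_mono order_trans order_refl)
    also have "\<dots> \<le> norm (mat 1 :: real^'d^'d) + b + b"
      using Bb[of k j] Bb[of "k - 1" "j + 1"] 3 m0 by (intro add_mono) auto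
    finally show ?thesis by simp
  next
    case 4
    then have "Acoef p q B j k = 0" unfolding Acoef_def by (simp only: if_False)
    then show ?thesis using b0 m0 by simp
  qed
qed



definition Tz :: "nat \<Rightarrow> nat \<Rightarrow> (int \<Rightarrow> int \<Rightarrow> complex^'d^'d) \<Rightarrow> complex \<Rightarrow> (int \<Rightarrow> complex^'d) \<Rightarrow> int \<Rightarrow> complex^'d::finite" where
  "Tz p q A z h = (\<lambda>j. z *s h j - Lop p q A h j)"

lemma norm_smult_cvec: "norm (z *s (v::complex^'d::finite)) = cmod z * norm v"
proof -
  have "norm (z *s v) = L2_set (\<lambda>i. cmod z * norm (v$i)) UNIV"
    unfolding norm_vec_def by (simp add: norm_mult)
  also have "\<dots> = cmod z * norm v"
    unfolding norm_vec_def by (simp add: L2_set_right_distrib)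
  finally show ?thesis .
qed

lemma mv_scaleR: "(A::complex^'n::finite^'m::finite) *v (c *\<^sub>R x) = c *\<^sub>R (A *v x)"
  by (simp add: vec_eq_iff matrix_vector_mult_def scaleR_sum_right)

lemma smult_scaleR: "(z::complex) *s (c *\<^sub>R (x::complex^'n::finite)) = c *\<^sub>R (z *s x)"
  by (simp add: vec_eq_iff)

lemma Tz_lin: "Tz p q A z (\<lambda>j. h j - g j) = (\<lambda>j. Tz p q A z h j - Tz p q A z g j)"
  unfolding Tz_def Lop_def
  by (simp add: fun_eq_iff matrix_vector_mult_diff_distrib sum_subtractf vector_ssub_ldistrib algebra_simps)

lemma Tz_scaleR: "Tz p q A z (\<lambda>j. c *\<^sub>R h j) = (\<lambda>j. c *\<^sub>R Tz p q A z h j)"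
  unfolding Tz_def Lop_def
  by (simp add: fun_eq_iff mv_scaleR smult_scaleR scaleR_sum_right scaleR_diff_right)

lemma Lop_l2:
  assumes Ab: "\<forall>j k x. norm (A j k *v x) \<le> Ma * norm x" and Ma: "0 \<le> Ma" and h: "l2g h"
  shows "l2g (Lop p q A h) \<and> nrm (Lop p q A h) \<le> real (card {- int p..int q}) * Ma * nrm h"
proof (rule l2g_band[OF h _ Ma])
  fix j
  have "norm (Lop p q A h j) \<le> (\<Sum>k\<in>{- int p..int q}. norm (A j k *v h (j + k)))"
    unfolding Lop_def by (rule norm_sum)
  also have "\<dots> \<le> (\<Sum>k\<in>{- int p..int q}. Ma * norm (h (j + k)))"
    using Ab by (intro sum_mono) blast
  finally show "norm (Lop p q A h j) \<le> (\<Sum>k\<in>{- int p..int q}. Ma * norm (h (j + k)))" .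
qed simp

lemma Tz_l2:
  assumes Ab: "\<forall>j k x. norm (A j k *v x) \<le> Ma * norm x" and Ma: "0 \<le> Ma" and h: "l2g h"
  shows "l2g (Tz p q A z h)"
proof -
  have a: "l2g (\<lambda>j. z *s h j)"
    using l2g_scale[OF h, of "cmod z" "\<lambda>j. z *s h j"] by (simp add: norm_smult_cvec)
  have "l2g (Lop p q A h)" using Lop_l2[OF Ab Ma h] by blast
  then show ?thesis unfolding Tz_def using l2g_diff[OF a] by blast
qed

lemma Tz_cont:
  fixes hs :: "nat \<Rightarrow> int \<Rightarrow> complex^'d::finite"
  assumes "\<forall>j. (\<lambda>m. hs m j) \<longlonglongrightarrow> h j"
  shows "(\<lambda>m. Tz p q A z (hs m) j) \<longlonglongrightarrow> Tz p q A z h j"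
proof -
  have v: "(\<lambda>m. B *v hs m i) \<longlonglongrightarrow> B *v h i" for B :: "complex^'d^'d" and i
  proof -
    have "bounded_linear (\<lambda>x::complex^'d. B *v x)"
      by (simp add: bounded_linear_intro[where K="\<Sum>i\<in>UNIV. \<Sum>j\<in>UNIV. norm (B$i$j)"] matrix_vector_right_distrib mv_scaleR matvec_bound mult.commute)
    then show ?thesis using assms bounded_linear.tendsto by blast
  qed
  have s: "(\<lambda>m. z *s hs m j) \<longlonglongrightarrow> z *s h j"
  proof -
    have "bounded_linear (\<lambda>x::complex^'d. z *s x)"
      by (rule bounded_linear_intro[where K="cmod z"]) (simp_all add: vector_sadd_rdistrib vector_add_ldistrib smult_scaleR norm_smult_cvec)
    then show ?thesis using assms bounded_linear.tendsto by blast
  qed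
  show ?thesis unfolding Tz_def Lop_def
    by (intro tendsto_diff s tendsto_sum v)
qed


lemma l2_eq: "l2 h \<longleftrightarrow> l2g h"
  by (simp add: l2_def l2g_def)

lemma Tz_zero: "Tz p q A z (\<lambda>j. 0) = (\<lambda>j. 0)"
  by (simp add: Tz_def Lop_def fun_eq_iff)

lemma res_bb:
  fixes A :: "int \<Rightarrow> int \<Rightarrow> complex^'d::finite^'d"
  assumes Ab: "\<forall>j k x. norm (A j k *v x) \<le> Ma * norm x" and Ma: "0 \<le> Ma"
    and z: "z \<in> resolvent_set p q A"
  shows "\<exists>\<delta>>0. \<forall>h. l2g h \<longrightarrow> \<delta> * nrm h \<le> nrm (Tz p q A z h)"
proof (rule bounded_below_abstract)
  have R: "\<And>g. l2g g \<Longrightarrow> \<exists>!h. l2g h \<and> Tz p q A z h = g"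
    using z unfolding resolvent_set_def l2_eq Tz_def fun_eq_iff by blast
  show "\<And>h g. Tz p q A z (\<lambda>j. h j - g j) = (\<lambda>j. Tz p q A z h j - Tz p q A z g j)" by (rule Tz_lin)
  show "\<And>h c. Tz p q A z (\<lambda>j. c *\<^sub>R h j) = (\<lambda>j. c *\<^sub>R Tz p q A z h j)" by (rule Tz_scaleR)
  show "\<And>h. l2g h \<Longrightarrow> l2g (Tz p q A z h)" using Tz_l2[OF Ab Ma] by blast
  show "\<And>g. l2g g \<Longrightarrow> \<exists>h. l2g h \<and> Tz p q A z h = g" using R by blast
  show "\<And>h. l2g h \<Longrightarrow> Tz p q A z h = (\<lambda>j. 0) \<Longrightarrow> h = (\<lambda>j. 0)"
  proof -
    fix h :: "int \<Rightarrow> complex^'d" assume h: "l2g h" "Tz p q A z h = (\<lambda>j. 0)"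
    have z0: "l2g (\<lambda>j. 0::complex^'d)" using l2g_by_fin[of "\<lambda>j. 0::complex^'d" 0] by (auto simp: L2_set_0')
    from R[OF z0] h Tz_zero[of p q A z] z0 show "h = (\<lambda>j. 0)" by blast
  qed
  show "\<And>hs h j. \<forall>j. (\<lambda>m. hs m j) \<longlonglongrightarrow> h j \<Longrightarrow> (\<lambda>m. Tz p q A z (hs m) j) \<longlonglongrightarrow> Tz p q A z h j"
    by (rule Tz_cont)
qed

lemma Tz_perturb:
  fixes A :: "int \<Rightarrow> int \<Rightarrow> complex^'d::finite^'d"
  assumes Ab: "\<forall>j k x. norm (A j k *v x) \<le> Ma * norm x" and Ma: "0 \<le> Ma" and h: "l2g h"
  shows "nrm (Tz p q A z h) \<le> nrm (Tz p q A z' h) + cmod (z - z') * nrm h"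
proof -
  have e: "Tz p q A z h = (\<lambda>j. Tz p q A z' h j + (z - z') *s h j)"
    unfolding Tz_def by (simp add: fun_eq_iff vec_eq_iff algebra_simps)
  have a: "l2g (Tz p q A z' h)" using Tz_l2[OF Ab Ma h] .
  have b: "l2g (\<lambda>j. (z - z') *s h j) \<and> nrm (\<lambda>j. (z - z') *s h j) \<le> cmod (z - z') * nrm h"
    by (rule l2g_scale[OF h]) (simp, rule eq_refl, rule norm_smult_cvec)
  show ?thesis unfolding e using l2g_add[OF a b[THEN conjunct1]] b by linarith
qed

lemma uniform_bb:
  fixes A :: "int \<Rightarrow> int \<Rightarrow> complex^'d::finite^'d"
  assumes Ab: "\<forall>j k x. norm (A j k *v x) \<le> Ma * norm x" and Ma: "0 \<le> Ma"
    and K: "compact K" "K \<subseteq> resolvent_set p q A"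
  shows "\<exists>\<delta>>0. \<forall>z\<in>K. \<forall>h. l2g h \<longrightarrow> \<delta> * nrm h \<le> nrm (Tz p q A z h)"
proof -
  have "\<forall>z\<in>K. \<exists>\<delta>>0. \<forall>h. l2g h \<longrightarrow> \<delta> * nrm h \<le> nrm (Tz p q A z h)"
    using res_bb[OF Ab Ma] K(2) by blast
  then obtain df where df: "\<And>z. z \<in> K \<Longrightarrow> df z > 0 \<and> (\<forall>h. l2g h \<longrightarrow> df z * nrm h \<le> nrm (Tz p q A z h))"
    by metis
  have cov: "K \<subseteq> (\<Union>z\<in>K. ball z (df z / 2))"
    using df by force
  obtain C where C: "C \<subseteq> K" "finite C" "K \<subseteq> (\<Union>z\<in>C. ball z (df z / 2))"
    using compactE_image[OF K(1) _ cov] by blast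
  define \<delta> where "\<delta> = Min (insert 1 ((\<lambda>z. df z / 2) ` C))"
  have dpos: "\<delta> > 0" unfolding \<delta>_def using C df by (subst Min_less_iff[symmetric, THEN iffD1] | subst Min_gr_iff) auto
  have dle: "\<delta> \<le> df z / 2" if "z \<in> C" for z unfolding \<delta>_def using C that by (intro Min_le) auto
  show ?thesis
  proof (intro exI conjI ballI allI impI)
    show "\<delta> > 0" by (rule dpos)
    fix z' and h :: "int \<Rightarrow> complex^'d" assume z': "z' \<in> K" and h: "l2g h"
    then obtain z where z: "z \<in> C" "z' \<in> ball z (df z / 2)" using C by blast
    have zK: "z \<in> K" using z C by blast
    have "df z * nrm h \<le> nrm (Tz p q A z h)" using df[OF zK] h by blast
    also have "\<dots> \<le> nrm (Tz p q A z' h) + cmod (z - z') * nrm h" by (rule Tz_perturb[OF Ab Ma h])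
    also have "cmod (z - z') * nrm h \<le> df z / 2 * nrm h"
      using z(2) nrm_nonneg[of h] by (intro mult_right_mono) (auto simp: dist_norm)
    finally have "df z / 2 * nrm h \<le> nrm (Tz p q A z' h)" by simp
    moreover have "\<delta> * nrm h \<le> df z / 2 * nrm h" using dle[OF z(1)] nrm_nonneg[of h] by (rule mult_right_mono)
    ultimately show "\<delta> * nrm h \<le> nrm (Tz p q A z' h)" by linarith
  qed
qed


lemma abs_exp_m1: "\<bar>exp x - 1\<bar> \<le> exp \<bar>x\<bar> - (1::real)"
proof (cases "x \<ge> 0")
  case True then show ?thesis by simp
next
  case False
  have "1 - exp x \<le> - x" using exp_ge_add_one_self[of x] by linarith
  moreover have "- x \<le> exp (- x) - 1" using exp_ge_add_one_self[of "- x"] by linarith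
  moreover have "exp x \<le> 1" using False by simp
  ultimately show ?thesis using False by simp
qed

lemma wdiff:
  fixes a b cc K :: real
  assumes "cc \<ge> 0" "\<bar>a - b\<bar> \<le> K"
  shows "\<bar>exp (cc * a) - exp (cc * b)\<bar> \<le> (exp (cc * K) - 1) * exp (cc * b)"
proof -
  have "exp (cc * a) - exp (cc * b) = exp (cc * b) * (exp (cc * (a - b)) - 1)"
    by (simp add: algebra_simps flip: exp_add)
  then have "\<bar>exp (cc * a) - exp (cc * b)\<bar> = exp (cc * b) * \<bar>exp (cc * (a - b)) - 1\<bar>"
    by (simp add: abs_mult)
  also have "\<dots> \<le> exp (cc * b) * (exp \<bar>cc * (a - b)\<bar> - 1)"
    by (intro mult_left_mono abs_exp_m1) simp
  also have "\<bar>cc * (a - b)\<bar> \<le> cc * K" using assms by (simp add: abs_mult mult_left_mono)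
  then have "exp (cc * b) * (exp \<bar>cc * (a - b)\<bar> - 1) \<le> exp (cc * b) * (exp (cc * K) - 1)"
    by (intro mult_left_mono) auto
  finally show ?thesis by (simp add: mult.commute)
qed

lemma delta_l2:
  "l2g (\<lambda>i. if i = j0 then e else (0::'a::real_normed_vector)) \<and> nrm (\<lambda>i. if i = j0 then e else 0) \<le> norm e"
proof (rule l2g_by_fin)
  fix F :: "int set" assume F: "finite F"
  have "L2_set (\<lambda>j. norm (if j = j0 then e else 0)) F \<le> (\<Sum>j\<in>F. norm (if j = j0 then e else 0))"
    by (rule L2_set_le_sum) simp
  also have "\<dots> = (\<Sum>j\<in>F. if j = j0 then norm e else 0)" by (intro sum.cong) auto
  also have "\<dots> \<le> norm e" using F by (simp add: sum.delta)
  finally show "L2_set (\<lambda>j. norm (if j = j0 then e else 0)) F \<le> norm e" .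
qed

lemma combes_thomas:
  fixes A :: "int \<Rightarrow> int \<Rightarrow> complex^'d::finite^'d" and g :: "int \<Rightarrow> complex^'d"
  assumes Ab: "\<forall>j k x. norm (A j k *v x) \<le> Ma * norm x" and Ma: "0 < Ma" and p1: "p \<ge> 1"
    and dp: "\<delta> > 0" and bb: "\<forall>h. l2g h \<longrightarrow> \<delta> * nrm h \<le> nrm (Tz p q A z h)"
    and g: "l2g g" and Tg: "Tz p q A z g = (\<lambda>j. if j = j0 then e else 0)"
    and cc: "cc = ln (1 + \<delta> / (2 * real (card {- int p..int q}) * Ma)) / real (p + q)"
  shows "norm (g j) \<le> 2 * norm e / \<delta> * exp (- cc * \<bar>j - j0\<bar>)"
proof -
  define Kc where "Kc = real (card {- int p..int q})"
  have Kc1: "Kc \<ge> 1" unfolding Kc_def using p1 by simp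
  define \<theta> where "\<theta> = \<delta> / (2 * Kc * Ma)"
  have th: "\<theta> > 0" unfolding \<theta>_def using dp Ma Kc1 by simp
  have pq: "real (p + q) > 0" using p1 by simp
  have ccv: "cc = ln (1 + \<theta>) / real (p + q)" unfolding cc \<theta>_def Kc_def ..
  have cc0: "cc \<ge> 0" unfolding ccv using th pq by simp
  have ecc: "exp (cc * real (p + q)) = 1 + \<theta>" unfolding ccv using th pq by simp
  define N where "N = nat \<bar>j - j0\<bar>"
  define w where "w i = exp (cc * real (min (nat \<bar>i - j0\<bar>) N))" for i
  define wg where "wg i = w i *\<^sub>R g i" for i
  have w0: "w i > 0" for i unfolding w_def by simp
  have wb: "w i \<le> exp (cc * real N)" for i unfolding w_def using cc0 by (simp add: mult_left_mono)
  have wgl: "l2g wg"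
    using l2g_scale[OF g, of "exp (cc * real N)" wg] wb w0 unfolding wg_def
    by (simp add: abs_of_pos mult_right_mono)
  define R where "R i = (\<Sum>k\<in>{- int p..int q}. A i k *v ((w i - w (i + k)) *\<^sub>R g (i + k)))" for i
  have dec: "Tz p q A z wg = (\<lambda>i. (if i = j0 then e else 0) + R i)"
  proof
    fix i
    have "Tz p q A z wg i = w i *\<^sub>R Tz p q A z g i + R i"
      unfolding Tz_def Lop_def R_def wg_def
      by (simp add: mv_scaleR smult_scaleR scaleR_diff_left scaleR_diff_right sum_subtractf scaleR_sum_right matrix_vector_mult_diff_distrib)
    also have "w i *\<^sub>R Tz p q A z g i = (if i = j0 then e else 0)"
      unfolding Tg by (simp add: w_def)
    finally show "Tz p q A z wg i = (if i = j0 then e else 0) + R i" .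
  qed
  have Rb: "norm (R i) \<le> (\<Sum>k\<in>{- int p..int q}. (Ma * \<theta>) * norm (wg (i + k)))" for i
  proof -
    have "norm (R i) \<le> (\<Sum>k\<in>{- int p..int q}. norm (A i k *v ((w i - w (i + k)) *\<^sub>R g (i + k))))"
      unfolding R_def by (rule norm_sum)
    also have "\<dots> \<le> (\<Sum>k\<in>{- int p..int q}. (Ma * \<theta>) * norm (wg (i + k)))"
    proof (rule sum_mono)
      fix k assume k: "k \<in> {- int p..int q}"
      have d: "\<bar>real (min (nat \<bar>i - j0\<bar>) N) - real (min (nat \<bar>i + k - j0\<bar>) N)\<bar> \<le> real (p + q)"
        using k by (simp add: min_def) linarith
      have "\<bar>w i - w (i + k)\<bar> \<le> (exp (cc * real (p + q)) - 1) * w (i + k)"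
        unfolding w_def by (rule wdiff[OF cc0 d])
      then have wd: "\<bar>w i - w (i + k)\<bar> \<le> \<theta> * w (i + k)" using ecc by simp
      have "norm (A i k *v ((w i - w (i + k)) *\<^sub>R g (i + k))) \<le> Ma * norm ((w i - w (i + k)) *\<^sub>R g (i + k))"
        using Ab by blast
      also have "\<dots> = Ma * (\<bar>w i - w (i + k)\<bar> * norm (g (i + k)))" by simp
      also have "\<dots> \<le> Ma * (\<theta> * w (i + k) * norm (g (i + k)))"
        using Ma wd by (intro mult_left_mono mult_right_mono) auto
      also have "\<dots> = (Ma * \<theta>) * norm (wg (i + k))"
        unfolding wg_def using w0[of "i + k"] by (simp add: abs_of_pos)
      finally show "norm (A i k *v ((w i - w (i + k)) *\<^sub>R g (i + k))) \<le> (Ma * \<theta>) * norm (wg (i + k))" .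
    qed
    finally show ?thesis .
  qed
  have Rl: "l2g R \<and> nrm R \<le> Kc * (Ma * \<theta>) * nrm wg"
    unfolding Kc_def using Ma th by (intro l2g_band[OF wgl _ _ Rb]) auto
  have KMt: "Kc * (Ma * \<theta>) = \<delta> / 2" unfolding \<theta>_def using Ma Kc1 by (simp add: field_simps)
  have D: "l2g (\<lambda>i. if i = j0 then e else 0) \<and> nrm (\<lambda>i. if i = j0 then e else 0) \<le> norm e"
    by (rule delta_l2)
  have "nrm (Tz p q A z wg) \<le> norm e + \<delta> / 2 * nrm wg"
  proof -
    have "nrm R \<le> \<delta> / 2 * nrm wg" using Rl KMt by simp
    then show ?thesis
      unfolding dec using l2g_add[OF D[THEN conjunct1] Rl[THEN conjunct1]] D by linarith
  qed
  moreover have "\<delta> * nrm wg \<le> nrm (Tz p q A z wg)" using bb wgl by blast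
  ultimately have "\<delta> / 2 * nrm wg \<le> norm e" by linarith
  then have nw: "nrm wg \<le> 2 * norm e / \<delta>" using dp by (simp add: field_simps)
  have wj: "w j = exp (cc * \<bar>j - j0\<bar>)" unfolding w_def N_def by simp
  have "exp (cc * \<bar>j - j0\<bar>) * norm (g j) \<le> 2 * norm e / \<delta>"
    using l2g_pointwise[OF wgl, of j] nw unfolding wg_def wj by simp
  then have X: "norm (g j) * exp (cc * \<bar>j - j0\<bar>) \<le> 2 * norm e / \<delta>" by (simp add: mult.commute)
  have "norm (g j) \<le> 2 * norm e / \<delta> / exp (cc * \<bar>j - j0\<bar>)"
    by (rule pos_le_divide_eq[THEN iffD2, OF exp_gt_zero X])
  also have "\<dots> = 2 * norm e / \<delta> * exp (- cc * \<bar>j - j0\<bar>)"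
    by (simp add: exp_minus field_simps)
  finally show ?thesis .
qed


theorem proposition3p9:
  fixes p q \<mu> :: nat and \<nu> :: real
    and F :: "real \<Rightarrow> (int \<Rightarrow> real^'d::finite) \<Rightarrow> real^'d"
    and f :: "real^'d \<Rightarrow> real^'d"
    and V :: "(real^'d) set"
    and ub :: "int \<Rightarrow> real^'d" and um up :: "real^'d"
    and G :: "complex \<Rightarrow> int \<Rightarrow> int \<Rightarrow> complex^'d^'d"
    and U :: "complex set"
  assumes p1: "p \<ge> 1" and q1: "q \<ge> 1" and nu: "\<nu> > 0" and V_open: "open V"
    and F_local: "\<forall>u v. (\<forall>k\<in>{- int p..int q - 1}. u k = v k) \<longrightarrow> F \<nu> u = F \<nu> v"
    and F_diff: "\<forall>u. (\<forall>k\<in>{- int p..int q - 1}. u k \<in> V) \<longrightarrow>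
                   (\<forall>k\<in>{- int p..int q - 1}. (\<lambda>v. F \<nu> (u(k := v))) differentiable (at (u k)))"
    and F_C1: "\<forall>k\<in>{- int p..int q - 1}.
                 continuous_on {u. \<forall>i\<in>{- int p..int q - 1}. u i \<in> V} (\<lambda>u. pderiv_slot F \<nu> u k)"
    and consistent: "\<forall>u\<in>V. F \<nu> (\<lambda>_. u) = f u"
    and f_diff: "\<forall>u\<in>V. f differentiable (at u)"
    and f_diag: "\<forall>u\<in>V. \<exists>(P::real^'d^'d) D. invertible P \<and> matrix_inv P ** jacobian f (at u) ** P = diagm D"
    and ub_V: "\<forall>j. ub j \<in> V" and um_V: "um \<in> V" and up_V: "up \<in> V"
    and ub_fix: "scheme F \<nu> ub = ub"
    and ub_lim: "\<exists>C (c::real). c > 0 \<and> (\<forall>j::int.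
                    (j \<ge> 0 \<longrightarrow> norm (ub j - up) \<le> C * exp (- c * \<bar>j\<bar>)) \<and>
                    (j \<le> 0 \<longrightarrow> norm (ub j - um) \<le> C * exp (- c * \<bar>j\<bar>)))"
    and commute: "\<forall>s\<in>{um, up}. \<forall>k\<in>{- int p..int q - 1}.
                    jacobian f (at s) ** Bconst F \<nu> s 0 k = Bconst F \<nu> s 0 k ** jacobian f (at s)"
    and mu1: "\<mu> \<ge> 1"
    and symbol: "\<forall>s\<in>{um, up}. \<exists>P D (lam :: 'd \<Rightarrow> int \<Rightarrow> real) (\<alpha> :: 'd \<Rightarrow> real) (\<beta> :: 'd \<Rightarrow> complex).
         invertible P \<and> matrix_inv P ** jacobian f (at s) ** P = diagm D \<and>
         (\<forall>k\<in>{- int p..int q}. matrix_inv P ** Acoef p q (Bconst F \<nu> s) 0 k ** P = diagm (\<lambda>l. lam l k)) \<and>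
         (\<forall>l. \<alpha> l \<noteq> 0 \<and> Re (\<beta> l) > 0 \<and>
            (\<forall>\<kappa>. cmod \<kappa> = 1 \<and> \<kappa> \<noteq> 1 \<longrightarrow> cmod (Fsym p q (lam l) \<kappa>) < 1) \<and>
            (\<exists>\<delta> > 0. \<exists>K. \<forall>\<xi>::real. \<bar>\<xi>\<bar> < \<delta> \<longrightarrow>
               (\<exists>w. Fsym p q (lam l) (cis \<xi>) = exp w \<and>
                    cmod (w - (- \<i> * complex_of_real (\<alpha> l) * complex_of_real \<xi>
                               - \<beta> l * complex_of_real (\<xi> ^ (2 * \<mu>))))
                      \<le> K * \<bar>\<xi>\<bar> ^ (2 * \<mu> + 1))))"
    and A_inv: "\<forall>j. invertible (Acoef p q (Bprof F \<nu> ub) j (- int p)) \<and>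
                    invertible (Acoef p q (Bprof F \<nu> ub) j (int q))"
    and Apm_inv: "\<forall>s\<in>{um, up}. invertible (Acoef p q (Bconst F \<nu> s) 0 (- int p)) \<and>
                    invertible (Acoef p q (Bconst F \<nu> s) 0 (int q))"
    and Green: "\<forall>z \<in> unbounded_component
                       (- (spectrum_op p q (\<lambda>j k. cmat (Acoef p q (Bconst F \<nu> up) j k))
                         \<union> spectrum_op p q (\<lambda>j k. cmat (Acoef p q (Bconst F \<nu> um) j k))))
                    \<inter> resolvent_set p q (\<lambda>j k. cmat (Acoef p q (Bprof F \<nu> ub) j k)).
                 \<forall>j0 e. l2 (\<lambda>j. G z j0 j *v e) \<and>
                   (\<forall>j. z *s (G z j0 j *v e)
                        - Lop p q (\<lambda>j k. cmat (Acoef p q (Bprof F \<nu> ub) j k)) (\<lambda>m. G z j0 m *v e) j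
                        = (if j = j0 then e else 0))"
    and U_open: "open U" and U_bdd: "bounded U"
    and U_sub: "closure U \<subseteq> unbounded_component
                       (- (spectrum_op p q (\<lambda>j k. cmat (Acoef p q (Bconst F \<nu> up) j k))
                         \<union> spectrum_op p q (\<lambda>j k. cmat (Acoef p q (Bconst F \<nu> um) j k))))
                    \<inter> resolvent_set p q (\<lambda>j k. cmat (Acoef p q (Bprof F \<nu> ub) j k))"
  shows "\<exists>C c. C > 0 \<and> c > 0 \<and>
           (\<forall>z\<in>U. \<forall>e j j0. Wnorm p q (\<lambda>m. G z j0 m *v e) j \<le> C * norm e * exp (- c * \<bar>j - j0\<bar>))"
proof -
  define A where "A = (\<lambda>j k. cmat (Acoef p q (Bprof F \<nu> ub) j k))"
  obtain Bb where Bb: "\<forall>j. \<forall>k\<in>{- int p..int q - 1}. norm (Bprof F \<nu> ub j k) \<le> Bb"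
    using coef_bound[OF F_C1 ub_V um_V up_V ub_lim] by blast
  define An where "An = norm (mat 1 :: real^'d^'d) + 2 * Bb"
  have An: "norm (Acoef p q (Bprof F \<nu> ub) j k) \<le> An" for j k
    unfolding An_def using Bb p1 q1 by (intro Acoef_bound) auto
  have An0: "0 \<le> An" using An[of 0 0] norm_ge_zero order_trans by blast
  define Ma where "Ma = real CARD('d) * real CARD('d) * An + 1"
  have Ma: "0 < Ma" unfolding Ma_def using An0 by (simp add: add_nonneg_pos)
  have Ab: "\<forall>j k x. norm (A j k *v x) \<le> Ma * norm x"
  proof (intro allI)
    fix j k and x :: "complex^'d"
    have "norm (A j k *v x) \<le> (real CARD('d) * real CARD('d) * norm (Acoef p q (Bprof F \<nu> ub) j k)) * norm x"
      unfolding A_def by (rule cmat_bound)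
    also have "\<dots> \<le> Ma * norm x"
    proof (rule mult_right_mono)
      have "real CARD('d) * real CARD('d) * norm (Acoef p q (Bprof F \<nu> ub) j k) \<le> real CARD('d) * real CARD('d) * An"
        using An[of j k] by (rule mult_left_mono) simp
      then show "real CARD('d) * real CARD('d) * norm (Acoef p q (Bprof F \<nu> ub) j k) \<le> Ma"
        unfolding Ma_def by linarith
    qed simp
    finally show "norm (A j k *v x) \<le> Ma * norm x" .
  qed
  have cU: "compact (closure U)" using U_bdd by (simp add: compact_closure)
  have cUr: "closure U \<subseteq> resolvent_set p q A" using U_sub unfolding A_def by blast
  obtain \<delta> where dp: "\<delta> > 0" and bb: "\<forall>z\<in>closure U. \<forall>h. l2g h \<longrightarrow> \<delta> * nrm h \<le> nrm (Tz p q A z h)"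
    using uniform_bb[OF Ab less_imp_le[OF Ma] cU cUr] by blast
  define cc where "cc = ln (1 + \<delta> / (2 * real (card {- int p..int q}) * Ma)) / real (p + q)"
  have card1: "real (card {- int p..int q}) \<ge> 1" using p1 by simp
  have ccp: "cc > 0" unfolding cc_def using dp Ma card1 p1 by (simp add: ln_gt_zero)
  define C where "C = real (p + q) * (2 / \<delta>) * exp (cc * real (p + q))"
  have Cp: "C > 0" unfolding C_def using p1 dp by simp
  have main: "\<forall>z\<in>U. \<forall>e j j0. Wnorm p q (\<lambda>m. G z j0 m *v e) j \<le> C * norm e * exp (- cc * \<bar>real_of_int j - real_of_int j0\<bar>)"
  proof (intro ballI allI)
    fix z e j j0 assume zU: "z \<in> U"
    define g where "g = (\<lambda>m. G z j0 m *v e)"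
    have zc: "z \<in> closure U" using zU closure_subset by blast
    then have "z \<in> unbounded_component
                       (- (spectrum_op p q (\<lambda>j k. cmat (Acoef p q (Bconst F \<nu> up) j k))
                         \<union> spectrum_op p q (\<lambda>j k. cmat (Acoef p q (Bconst F \<nu> um) j k))))
                    \<inter> resolvent_set p q (\<lambda>j k. cmat (Acoef p q (Bprof F \<nu> ub) j k))"
      using U_sub by blast
    from Green[rule_format, OF this, of j0 e]
    have gl: "l2g g" and Tg: "Tz p q A z g = (\<lambda>j. if j = j0 then e else 0)"
      unfolding g_def l2_eq Tz_def A_def by (auto simp: fun_eq_iff)
    have gb: "norm (g m) \<le> 2 * norm e / \<delta> * exp (- cc * \<bar>m - j0\<bar>)" for m
      by (rule combes_thomas[OF Ab Ma p1 dp bspec[OF bb zc] gl Tg cc_def])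
    define I where "I = {j - int p..j + int q - 1}"
    have cI: "card I = p + q" unfolding I_def by simp
    have "Wnorm p q g j = L2_set (\<lambda>m. norm (g m)) I" unfolding Wnorm_def L2_set_def I_def ..
    also have "\<dots> \<le> (\<Sum>m\<in>I. norm (g m))" by (rule L2_set_le_sum) simp
    also have "\<dots> \<le> (\<Sum>m\<in>I. 2 * norm e / \<delta> * (exp (cc * real (p + q)) * exp (- cc * \<bar>j - j0\<bar>)))"
    proof (rule sum_mono)
      fix m assume m: "m \<in> I"
      have "\<bar>j - j0\<bar> - \<bar>m - j0\<bar> \<le> int (p + q)" using m unfolding I_def by auto
      then have "real_of_int \<bar>j - j0\<bar> - real_of_int \<bar>m - j0\<bar> \<le> real (p + q)" by linarith
      then have "cc * (real_of_int \<bar>j - j0\<bar> - real_of_int \<bar>m - j0\<bar>) \<le> cc * real (p + q)"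
        using ccp by (intro mult_left_mono) auto
      then have "- cc * \<bar>m - j0\<bar> \<le> cc * real (p + q) + - cc * \<bar>j - j0\<bar>" by (simp add: algebra_simps)
      then have "exp (- cc * \<bar>m - j0\<bar>) \<le> exp (cc * real (p + q)) * exp (- cc * \<bar>j - j0\<bar>)"
        by (simp flip: exp_add)
      then have "2 * norm e / \<delta> * exp (- cc * \<bar>m - j0\<bar>) \<le> 2 * norm e / \<delta> * (exp (cc * real (p + q)) * exp (- cc * \<bar>j - j0\<bar>))"
        using dp by (intro mult_left_mono) auto
      then show "norm (g m) \<le> 2 * norm e / \<delta> * (exp (cc * real (p + q)) * exp (- cc * \<bar>j - j0\<bar>))"
        using gb[of m] by linarith
    qed
    also have "\<dots> = C * norm e * exp (- cc * \<bar>j - j0\<bar>)"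
      unfolding C_def using cI by (simp add: field_simps)
    finally have W: "Wnorm p q g j \<le> C * norm e * exp (- cc * \<bar>j - j0\<bar>)" .
    then show "Wnorm p q (\<lambda>m. G z j0 m *v e) j \<le> C * norm e * exp (- cc * \<bar>real_of_int j - real_of_int j0\<bar>)"
      unfolding g_def by simp
  qed
  show ?thesis by (rule exI[of _ C], rule exI[of _ cc], intro conjI Cp ccp main)
qed

end
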